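(* Let $\epsilon\in(0,1)$ and $0<h\le2\epsilon^2$. Then there exists an initial value $u_0$ with $|u_0|>1$ such that the sequence $(u_n)_{n\ge0}$ starting at $u_0$ and satisfying the implicit midpoint scheme $$\frac{u_n-u_{n-1}}{h}+\frac{1}{\epsilon^2}f\!\left(\frac{u_n+u_{n-1}}{2}\right)=0,\qquad n\ge1,\quad f(u)=u^3-u,$$ converges to an incorrect steady state, i.e. $\lim_{n\to\infty}u_n\ne\mathrm{sign}(u_0)$.
   Context: The scheme discretizes the ODE $u'(t)+\frac{1}{\epsilon^2}(u^3-u)=0$, $u(0)=u_0$, whose solutions converge to $\mathrm{sign}(u_0)$. For $h\le2\epsilon^2$ each step equation has a unique real solution $u_n$, so the sequence is uniquely determined. *)

theory Defs
  imports Complex_Main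
begin

definition ac_f :: "real \<Rightarrow> real" where
  "ac_f u = u ^ 3 - u"

definition midpoint_seq :: "real \<Rightarrow> real \<Rightarrow> (nat \<Rightarrow> real) \<Rightarrow> bool" where
  "midpoint_seq eps h u \<longleftrightarrow>
     (\<forall>n\<ge>1. (u n - u (n - 1)) / h + (1 / eps ^ 2) * ac_f ((u n + u (n - 1)) / 2) = 0)"

end

theory Submission
  imports Defs
begin

lemma step_unique:
  fixes r a x y :: real
  assumes r: "0 < r" "r \<le> 2"
    and hx: "x - a + r * ac_f ((x + a) / 2) = 0"
    and hy: "y - a + r * ac_f ((y + a) / 2) = 0"
  shows "x = y"
proof (rule ccontr)
  assume ne: "x \<noteq> y"
  define p where "p = (x + a) / 2"
  define q where "q = (y + a) / 2"
  have pq: "p \<noteq> q" using ne by (simp add: p_def q_def)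
  have xy: "x - y = 2 * (p - q)" by (simp add: p_def q_def field_simps)
  have e: "(x - y) + r * (ac_f p - ac_f q) = 0" using hx hy by (simp add: p_def q_def algebra_simps)
  have "(p - q) * (2 - r + r * (p^2 + p*q + q^2)) = (x - y) + r * (ac_f p - ac_f q)"
    unfolding xy by (simp add: ac_f_def algebra_simps power2_eq_square power3_eq_cube)
  hence "(p - q) * (2 - r + r * (p^2 + p*q + q^2)) = 0" using e by simp
  hence "2 - r + r * (p^2 + p*q + q^2) = 0" using pq by simp
  moreover have "p^2 + p*q + q^2 > 0"
  proof -
    have "p^2 + p*q + q^2 = (p + q/2)^2 + 3/4 * q^2" by (simp add: algebra_simps power2_eq_square)
    moreover have "(p + q/2)^2 + 3/4 * q^2 > 0"
    proof (cases "q = 0")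
      case True then show ?thesis using pq by simp
    next
      case False then show ?thesis by (simp add: add_nonneg_pos)
    qed
    ultimately show ?thesis by simp
  qed
  ultimately show False using r
    by (smt (verit) mult_pos_pos)
qed

lemma scheme_iff:
  fixes eps h a x :: real
  assumes "0 < eps" "0 < h"
  shows "((x - a) / h + (1 / eps ^ 2) * ac_f ((x + a) / 2) = 0) \<longleftrightarrow>
         (x - a + (h / eps^2) * ac_f ((x + a) / 2) = 0)"
proof -
  have "(x - a) / h + (1 / eps ^ 2) * ac_f ((x + a) / 2) =
        (x - a + (h / eps^2) * ac_f ((x + a) / 2)) / h"
    using assms by (simp add: field_simps)
  thus ?thesis using assms by simp
qed

theorem lemma3p6:
  fixes eps h :: real
  assumes "0 < eps" and "eps < 1" and "0 < h" and "h \<le> 2 * eps ^ 2"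
  shows "\<exists>u0. \<bar>u0\<bar> > 1 \<and>
           (\<exists>u. u 0 = u0 \<and> midpoint_seq eps h u) \<and>
           (\<forall>u. u 0 = u0 \<and> midpoint_seq eps h u \<longrightarrow>
                 (\<exists>L. u \<longlonglongrightarrow> L \<and> L \<noteq> sgn u0))"
proof -
  define r where "r = h / eps^2"
  have r0: "0 < r" using assms by (simp add: r_def)
  have r2: "r \<le> 2" using assms by (simp add: r_def field_simps)
  define v where "v = sqrt (8 / r + 4)"
  have v2: "v^2 = 8 / r + 4" using r0 by (simp add: v_def)
  have vgt: "v > 1"
  proof -
    have "sqrt 1 < sqrt (8 / r + 4)" using r0 by (intro real_sqrt_less_mono) (simp add: add_pos_pos)
    thus ?thesis by (simp add: v_def)
  qed
  have key1: "0 - v + r * ac_f ((0 + v) / 2) = 0"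
  proof -
    have "0 - v + r * ac_f ((0 + v) / 2) = v * (r * (v^2/8 - 1/2) - 1)"
      by (simp add: ac_f_def algebra_simps power2_eq_square power3_eq_cube)
    also have "r * (v^2/8 - 1/2) = 1" using r0 v2 by (simp add: field_simps)
    finally show ?thesis by simp
  qed
  have key0: "0 - 0 + r * ac_f ((0 + 0) / 2) = 0" by (simp add: ac_f_def)
  have sch: "midpoint_seq eps h u \<longleftrightarrow>
       (\<forall>n\<ge>1. u n - u (n - 1) + r * ac_f ((u n + u (n - 1)) / 2) = 0)" for u
    unfolding midpoint_seq_def r_def using scheme_iff[OF assms(1,3)] by simp
  show ?thesis
  proof (rule exI[of _ v], intro conjI allI impI)
    show "\<bar>v\<bar> > 1" using vgt by simp
    show "\<exists>u. u 0 = v \<and> midpoint_seq eps h u"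
    proof (rule exI[of _ "\<lambda>n. if n = 0 then v else 0"], rule conjI)
      show "midpoint_seq eps h (\<lambda>n. if n = 0 then v else 0)"
      unfolding sch using key1 key0
      by (auto simp: not_less_eq_eq)
    qed simp
  next
    fix u assume H: "u 0 = v \<and> midpoint_seq eps h u"
    hence S: "\<And>n. n \<ge> 1 \<Longrightarrow> u n - u (n - 1) + r * ac_f ((u n + u (n - 1)) / 2) = 0"
      using sch by blast
    have Z: "u (Suc n) = 0" for n
    proof (induction n)
      case 0
      show ?case using step_unique[OF r0 r2 S[of 1]] H key1 by simp
    next
      case (Suc n)
      show ?case using step_unique[OF r0 r2 S[of "Suc (Suc n)"]] Suc key0 by simp
    qed
    have "(\<lambda>n. u (Suc n)) \<longlonglongrightarrow> 0" using Z by simp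
    hence "u \<longlonglongrightarrow> 0" by (rule LIMSEQ_imp_Suc)
    moreover have "(0::real) \<noteq> sgn v" using vgt by simp
    ultimately show "\<exists>L. u \<longlonglongrightarrow> L \<and> L \<noteq> sgn v" by blast
  qed
qed

end
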